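(* Let $X=(X_1,\ldots,X_n)$ be i.i.d. real random variables whose common distribution has a density $f$ with respect to Lebesgue measure and a unique median $m$, with constants $r,L>0$ such that $f(u)\ge L$ for all $u\in[m-r,m+r]$. Assume $|m|\le R$ for some $R>0$ and let $T>R+r$. Let $\alpha_3\in[2e^{-nL^2r^2/2},1]$. Then with probability at least $1-\alpha_3$, $$|\hat m_T(X)-m|\le\sqrt{\frac{2\log(2/\alpha_3)}{nL^2}}.$$
   Context: For $x\in\mathbb R^n$, $x_{(1)}\le\cdots\le x_{(n)}$ denote its ordered coordinates, $\ell=\lfloor n/2\rfloor$, and $\hat m(x)=x_{(\ell)}$. For $T>0$, $f_T(u)=u$ if $|u|\le T$ and $f_T(u)=\mathrm{sign}(u)T$ otherwise; $\hat m_T(x)=\hat m(y)$ where $y_i=f_T(x_i)$, $i=1,\ldots,n$. *)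

theory Defs
  imports "HOL-Probability.Probability"
begin

definition order_stat :: "nat \<Rightarrow> (nat \<Rightarrow> real) \<Rightarrow> nat \<Rightarrow> real" where
  "order_stat n x k = sort (map x [0..<n]) ! (k - 1)"

definition emp_median :: "nat \<Rightarrow> (nat \<Rightarrow> real) \<Rightarrow> real" where
  "emp_median n x = order_stat n x (n div 2)"

definition clip :: "real \<Rightarrow> real \<Rightarrow> real" where
  "clip T u = (if \<bar>u\<bar> \<le> T then u else sgn u * T)"

definition trunc_median :: "real \<Rightarrow> nat \<Rightarrow> (nat \<Rightarrow> real) \<Rightarrow> real" where
  "trunc_median T n x = emp_median n (\<lambda>i. clip T (x i))"

definition is_median :: "real measure \<Rightarrow> real \<Rightarrow> bool" where
  "is_median mu m \<longleftrightarrow> measure mu {..m} \<ge> 1/2 \<and> measure mu {m..} \<ge> 1/2"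

end

theory Submission
  imports Defs
begin

lemma (in prob_space) dens_lower:
  fixes X :: "'a \<Rightarrow> real"
  assumes D: "distributed M lborel X (\<lambda>u. ennreal (f u))"
    and fL: "\<And>u. u \<in> S \<Longrightarrow> f u \<ge> L" and L: "L \<ge> 0"
    and A: "A \<in> sets borel" "A \<subseteq> S" "emeasure lborel A = ennreal l" "l \<ge> 0"
  shows "prob (X -` A \<inter> space M) \<ge> L * l"
proof -
  have Xm: "X \<in> measurable M borel" using distributed_measurable[OF D] by simp
  have fm: "(\<lambda>u. ennreal (f u)) \<in> borel_measurable borel"
    using distributed_borel_measurable[OF D] by simp
  have "emeasure M (X -` A \<inter> space M) = emeasure (distr M lborel X) A"
    using A Xm by (simp add: emeasure_distr)
  also have "\<dots> = emeasure (density lborel (\<lambda>u. ennreal (f u))) A"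
    using distributed_distr_eq_density[OF D] by simp
  also have "\<dots> = (\<integral>\<^sup>+x. ennreal (f x) * indicator A x \<partial>lborel)"
    using A fm by (simp add: emeasure_density)
  also have "\<dots> \<ge> (\<integral>\<^sup>+x. ennreal L * indicator A x \<partial>lborel)"
    by (intro nn_integral_mono) (use A fL in \<open>auto simp: indicator_def intro!: ennreal_leI\<close>)
  finally have "ennreal L * ennreal l \<le> emeasure M (X -` A \<inter> space M)"
    using A by (simp add: nn_integral_cmult_indicator)
  then show ?thesis
    using L A by (simp add: emeasure_eq_measure ennreal_mult'[symmetric] ennreal_le_iff flip: ennreal_mult)
qed

lemma (in prob_space) cdf_bounds:
  fixes X :: "'a \<Rightarrow> real"
  assumes D: "distributed M lborel X (\<lambda>u. ennreal (f u))"
    and med: "is_median (distr M borel X) m"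
    and fL: "\<And>u. u \<in> {m - r..m + r} \<Longrightarrow> f u \<ge> L" and L: "L \<ge> 0"
    and e: "0 < e" "e \<le> r"
  shows "prob {\<omega>\<in>space M. X \<omega> \<le> m + e} \<ge> 1/2 + L * e"
    and "prob {\<omega>\<in>space M. X \<omega> < m - e} \<le> 1/2 - L * e"
proof -
  have Xm: "X \<in> measurable M borel" using distributed_measurable[OF D] by simp
  have r0: "r > 0" using e by simp
  have m1: "prob (X -` {..m} \<inter> space M) \<ge> 1/2"
    using med Xm by (simp add: is_median_def measure_distr)
  have m2: "prob (X -` {m..} \<inter> space M) \<ge> 1/2"
    using med Xm by (simp add: is_median_def measure_distr)
  have i1: "prob (X -` {m<..m+e} \<inter> space M) \<ge> L * e"
    by (rule dens_lower[OF D _ L, where S="{m-r..m+r}" and A="{m<..m+e}" and l=e]) (use e r0 fL in auto)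
  have i2: "prob (X -` {m-e..<m} \<inter> space M) \<ge> L * e"
    by (rule dens_lower[OF D _ L, where S="{m-r..m+r}" and A="{m-e..<m}" and l=e]) (use e r0 fL in auto)
  have "{\<omega>\<in>space M. X \<omega> \<le> m + e} = (X -` {..m} \<inter> space M) \<union> (X -` {m<..m+e} \<inter> space M)"
    using e by auto
  moreover have "prob ((X -` {..m} \<inter> space M) \<union> (X -` {m<..m+e} \<inter> space M))
     = prob (X -` {..m} \<inter> space M) + prob (X -` {m<..m+e} \<inter> space M)"
    by (rule finite_measure_Union) (use Xm in auto)
  ultimately show "prob {\<omega>\<in>space M. X \<omega> \<le> m + e} \<ge> 1/2 + L * e"
    using m1 i1 by simp
  have "{\<omega>\<in>space M. X \<omega> < m - e} = space M - ((X -` {m..} \<inter> space M) \<union> (X -` {m-e..<m} \<inter> space M))"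
    using e by auto
  moreover have "prob (space M - ((X -` {m..} \<inter> space M) \<union> (X -` {m-e..<m} \<inter> space M)))
     = 1 - prob ((X -` {m..} \<inter> space M) \<union> (X -` {m-e..<m} \<inter> space M))"
    by (rule prob_compl) (use Xm in auto)
  moreover have "prob ((X -` {m..} \<inter> space M) \<union> (X -` {m-e..<m} \<inter> space M))
     = prob (X -` {m..} \<inter> space M) + prob (X -` {m-e..<m} \<inter> space M)"
    by (rule finite_measure_Union) (use Xm in auto)
  ultimately show "prob {\<omega>\<in>space M. X \<omega> < m - e} \<le> 1/2 - L * e"
    using m2 i2 by simp
qed

lemma sorted_nth_downclosed:
  fixes s :: "real list"
  assumes s: "sorted s" and k: "k < length s"
    and P: "\<And>x y. P x \<Longrightarrow> y \<le> x \<Longrightarrow> P y"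
  shows "P (s ! k) \<longleftrightarrow> k + 1 \<le> length (filter P s)"
proof
  assume Pk: "P (s ! k)"
  have "\<forall>x\<in>set (take (k+1) s). P x"
  proof
    fix x assume "x \<in> set (take (k+1) s)"
    then obtain j where j: "j < length (take (k+1) s)" "x = take (k+1) s ! j"
      by (auto simp: in_set_conv_nth)
    then have "j \<le> k" "x = s ! j" by auto
    then have "x \<le> s ! k" using s k by (simp add: sorted_nth_mono)
    then show "P x" using P Pk by blast
  qed
  then have "filter P (take (k+1) s) = take (k+1) s" by simp
  then have "length (filter P (take (k+1) s)) = k + 1" using k by simp
  moreover have "filter P s = filter P (take (k+1) s) @ filter P (drop (k+1) s)"
    by (metis append_take_drop_id filter_append)
  ultimately show "k + 1 \<le> length (filter P s)" by simp
next
  assume c: "k + 1 \<le> length (filter P s)"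
  show "P (s ! k)"
  proof (rule ccontr)
    assume nP: "\<not> P (s ! k)"
    have "\<forall>x\<in>set (drop k s). \<not> P x"
    proof
      fix x assume "x \<in> set (drop k s)"
      then obtain j where j: "j < length (drop k s)" "x = drop k s ! j"
        by (auto simp: in_set_conv_nth)
      then have "x = s ! (k + j)" "k + j < length s" by auto
      then have "s ! k \<le> x" using s by (simp add: sorted_nth_mono)
      then show "\<not> P x" using P nP by blast
    qed
    then have "filter P (drop k s) = []" by (simp add: filter_empty_conv)
    moreover have "filter P s = filter P (take k s) @ filter P (drop k s)"
      by (metis append_take_drop_id filter_append)
    ultimately have "length (filter P s) \<le> k"
      by (metis append_Nil2 length_filter_le length_take min.bounded_iff)
    then show False using c by simp
  qed
qed

lemma length_filter_sort:
  "length (filter P (sort xs)) = length (filter P xs)"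
  by (metis mset_filter mset_sort size_mset)

lemma sum_ind_filter:
  "(\<Sum>i\<in>{0..<n}. (if P (y i) then 1 else 0 :: real)) = real (length (filter P (map y [0..<n])))"
  by (induction n) auto

lemma order_stat_downclosed:
  assumes k: "1 \<le> k" "k \<le> n"
    and P: "\<And>x y. P x \<Longrightarrow> y \<le> x \<Longrightarrow> P y"
  shows "P (order_stat n y k) \<longleftrightarrow> real k \<le> (\<Sum>i\<in>{0..<n}. (if P (y i) then 1 else 0 :: real))"
proof -
  have "P (order_stat n y k) \<longleftrightarrow> (k - 1) + 1 \<le> length (filter P (sort (map y [0..<n])))"
    unfolding order_stat_def
    by (rule sorted_nth_downclosed) (use k P in auto)
  also have "\<dots> \<longleftrightarrow> real k \<le> (\<Sum>i\<in>{0..<n}. (if P (y i) then 1 else 0 :: real))"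
    using k by (simp add: length_filter_sort sum_ind_filter)
  finally show ?thesis .
qed

lemma clip_le_iff: "\<bar>c\<bar> < T \<Longrightarrow> (clip T x \<le> c \<longleftrightarrow> x \<le> c)"
  by (auto simp: clip_def sgn_if abs_if split: if_splits)
lemma clip_less_iff: "\<bar>c\<bar> < T \<Longrightarrow> (clip T x < c \<longleftrightarrow> x < c)"
  by (auto simp: clip_def sgn_if abs_if split: if_splits)

theorem lemma3:
  fixes M :: "'a measure" and X :: "nat \<Rightarrow> 'a \<Rightarrow> real" and n :: nat
    and f :: "real \<Rightarrow> real" and m r L R T \<alpha>3 :: real
  assumes "prob_space M"
    and indep: "prob_space.indep_vars M (\<lambda>_. borel) X {0..<n}"
    and dens: "\<And>i. i < n \<Longrightarrow> distributed M lborel (X i) (\<lambda>u. ennreal (f u))"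
    and med: "\<forall>i<n. is_median (distr M borel (X i)) m"
    and med_unique: "\<forall>i<n. \<forall>m'. is_median (distr M borel (X i)) m' \<longrightarrow> m' = m"
    and "r > 0" and "L > 0"
    and fL: "\<And>u. u \<in> {m - r..m + r} \<Longrightarrow> f u \<ge> L"
    and "R > 0" and "\<bar>m\<bar> \<le> R" and "T > R + r"
    and "\<alpha>3 \<in> {2 * exp (- (real n * L^2 * r^2 / 2))..1}"
  shows "prob_space.prob M {\<omega> \<in> space M.
           \<bar>trunc_median T n (\<lambda>i. X i \<omega>) - m\<bar> \<le> sqrt (2 * ln (2 / \<alpha>3) / (real n * L^2))}
         \<ge> 1 - \<alpha>3"
proof -
  interpret prob_space M by fact
  define \<alpha> where "\<alpha> = \<alpha>3"
  define \<epsilon> where "\<epsilon> = sqrt (2 * ln (2 / \<alpha>) / (real n * L^2))"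
  have a1: "\<alpha> \<le> 1" and a2: "2 * exp (- (real n * L^2 * r^2 / 2)) \<le> \<alpha>"
    using assms(12) by (auto simp: \<alpha>_def)
  have apos: "\<alpha> > 0" using a2 by (smt (verit) exp_gt_zero)
  have n0: "n > 0"
  proof (rule ccontr)
    assume "\<not> n > 0" then have "n = 0" by simp
    then show False using a1 a2 by simp
  qed
  have ln2: "ln (2 / \<alpha>) \<ge> ln 2"
    using apos a1 by (simp add: divide_simps)
  have ln2p: "ln (2::real) > 0" by simp
  have lnle: "ln (2 / \<alpha>) \<le> real n * L^2 * r^2 / 2"
  proof -
    have "2 / \<alpha> \<le> exp (real n * L^2 * r^2 / 2)"
      using a2 apos by (simp add: divide_simps exp_minus) (simp add: mult.commute)
    then have "ln (2 / \<alpha>) \<le> ln (exp (real n * L^2 * r^2 / 2))"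
      using apos by (subst ln_le_cancel_iff) auto
    then show ?thesis by simp
  qed

  have Lp: "L > 0" and rp: "r > 0" using assms by auto
  have lnpos: "ln (2 / \<alpha>) > 0" using ln2 ln2p by linarith
  have qpos: "2 * ln (2 / \<alpha>) / (real n * L^2) > 0"
    using lnpos n0 Lp by (intro divide_pos_pos mult_pos_pos) auto
  have eps2: "\<epsilon>^2 = 2 * ln (2 / \<alpha>) / (real n * L^2)"
    unfolding \<epsilon>_def using qpos by simp
  have epos: "\<epsilon> > 0" unfolding \<epsilon>_def using qpos by simp
  have "\<epsilon>^2 \<le> r^2"
    unfolding eps2 using lnle n0 Lp by (simp add: divide_simps) (simp add: algebra_simps)
  then have er: "\<epsilon> \<le> r" using epos rp by (simp add: power2_le_iff_abs_le)
  have fL': "\<And>u. u \<in> {m - r..m + r} \<Longrightarrow> f u \<ge> L" by (rule fL)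
  have med0: "is_median (distr M borel (X 0)) m" using med n0 by simp
  have "prob {\<omega>\<in>space M. X 0 \<omega> \<le> m + r} \<ge> 1/2 + L * r"
    by (rule cdf_bounds(1)[OF dens[OF n0] med0 fL']) (use Lp rp in auto)
  moreover have "prob {\<omega>\<in>space M. X 0 \<omega> \<le> m + r} \<le> 1" by (rule prob_le_1)
  ultimately have Lr: "L * r \<le> 1/2" by linarith
  have "(L * r)^2 \<le> (1/2)^2" using Lr Lp rp by (intro power_mono) auto
  then have "L^2 * r^2 \<le> 1/4" by (simp add: power_mult_distrib power2_eq_square mult_ac)
  then have "real n * L^2 * r^2 \<le> real n / 4" using n0
    by (metis mult.assoc mult_left_mono of_nat_0_le_iff times_divide_eq_right mult_1_right)
  then have "ln 2 \<le> real n / 8" using ln2 lnle by linarith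
  then have n6: "real n \<ge> 16 / 3" using ln2_ge_two_thirds by linarith
  define t where "t = real n * L * \<epsilon> / 2"
  have tq: "2 * t^2 / real n = ln (2 / \<alpha>)"
  proof -
    have "2 * t^2 / real n = real n * (L^2 * \<epsilon>^2) / 2"
      unfolding t_def using n0 by (simp add: power2_eq_square field_simps)
    also have "real n * (L^2 * \<epsilon>^2) = 2 * ln (2 / \<alpha>)"
      using eps2 n0 Lp by (simp add: field_simps)
    finally show ?thesis by simp
  qed
  have expt: "exp (- 2 * t^2 / real n) = \<alpha> / 2"
  proof -
    have "exp (- 2 * t^2 / real n) = exp (- ln (2 / \<alpha>))" using tq by simp
    also have "\<dots> = \<alpha> / 2" using apos by (simp add: exp_minus)
    finally show ?thesis .
  qed
  have t1: "2 * t \<ge> 1"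
  proof -
    have "(2 * t)^2 = 2 * real n * (2 * t^2 / real n)"
      using n0 by (simp add: power2_eq_square)
    also have "\<dots> = 2 * (real n * ln (2 / \<alpha>))" using tq by simp
    finally have eq: "(2 * t)^2 = 2 * (real n * ln (2 / \<alpha>))" .
    have "real n * ln (2 / \<alpha>) \<ge> (16/3) * (2/3)"
      by (rule mult_mono) (use n6 ln2 ln2_ge_two_thirds in auto)
    then have h: "1\<^sup>2 \<le> (2 * t)\<^sup>2" using eq by simp
    have "t \<ge> 0" unfolding t_def using epos Lp by simp
    then have "0 \<le> 2 * t" by simp
    from power2_le_imp_le[OF h this] show ?thesis .
  qed
  have tpos: "t > 0" unfolding t_def using epos Lp n0 by simp
  define gY where "gY = (\<lambda>x::real. if x \<le> m + \<epsilon> then 1 else 0 :: real)"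
  define gZ where "gZ = (\<lambda>x::real. if x < m - \<epsilon> then 1 else 0 :: real)"
  define Y where "Y = (\<lambda>i \<omega>. gY (X i \<omega>))"
  define Z where "Z = (\<lambda>i \<omega>. gZ (X i \<omega>))"
  have gYm: "gY \<in> borel_measurable borel" unfolding gY_def by measurable
  have gZm: "gZ \<in> borel_measurable borel" unfolding gZ_def by measurable
  have Xm: "\<And>i. i < n \<Longrightarrow> X i \<in> borel_measurable M"
    using dens distributed_measurable by fastforce
  have Ym: "\<And>i. i < n \<Longrightarrow> Y i \<in> borel_measurable M"
    unfolding Y_def using gYm Xm by measurable
  have Zm: "\<And>i. i < n \<Longrightarrow> Z i \<in> borel_measurable M"
    unfolding Z_def using gZm Xm by measurable
  define \<mu>Y where "\<mu>Y = (\<Sum>i\<in>{0..<n}. expectation (Y i))"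
  define \<mu>Z where "\<mu>Z = (\<Sum>i\<in>{0..<n}. expectation (Z i))"
  interpret HY: Hoeffding_ineq M "{0..<n}" Y "\<lambda>_. 0" "\<lambda>_. 1" \<mu>Y
  proof unfold_locales
    show "indep_vars (\<lambda>_. borel) Y {0..<n}"
      unfolding Y_def by (rule indep_vars_compose2[OF indep]) (use gYm in auto)
  qed (auto simp: \<mu>Y_def Y_def gY_def)
  interpret HZ: Hoeffding_ineq M "{0..<n}" Z "\<lambda>_. 0" "\<lambda>_. 1" \<mu>Z
  proof unfold_locales
    show "indep_vars (\<lambda>_. borel) Z {0..<n}"
      unfolding Z_def by (rule indep_vars_compose2[OF indep]) (use gZm in auto)
  qed (auto simp: \<mu>Z_def Z_def gZ_def)
  have EY: "expectation (Y i) = prob {\<omega>\<in>space M. X i \<omega> \<le> m + \<epsilon>}" if "i < n" for i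
  proof -
    have "expectation (Y i) = expectation (indicator {\<omega>\<in>space M. X i \<omega> \<le> m + \<epsilon>})"
      by (rule Bochner_Integration.integral_cong) (auto simp: Y_def gY_def indicator_def)
    also have "\<dots> = prob {\<omega>\<in>space M. X i \<omega> \<le> m + \<epsilon>}"
      by (simp add: Int_absorb2 Collect_subset)
    finally show ?thesis .
  qed
  have EZ: "expectation (Z i) = prob {\<omega>\<in>space M. X i \<omega> < m - \<epsilon>}" if "i < n" for i
  proof -
    have "expectation (Z i) = expectation (indicator {\<omega>\<in>space M. X i \<omega> < m - \<epsilon>})"
      by (rule Bochner_Integration.integral_cong) (auto simp: Z_def gZ_def indicator_def)
    also have "\<dots> = prob {\<omega>\<in>space M. X i \<omega> < m - \<epsilon>}"
      by (simp add: Int_absorb2 Collect_subset)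
    finally show ?thesis .
  qed
  have muY: "\<mu>Y \<ge> real n * (1/2 + L * \<epsilon>)"
  proof -
    have "(\<Sum>i\<in>{0..<n}. 1/2 + L * \<epsilon>) \<le> \<mu>Y"
      unfolding \<mu>Y_def
    proof (rule sum_mono)
      fix i assume i: "i \<in> {0..<n}"
      have mi: "is_median (distr M borel (X i)) m" using med i by simp
      show "1/2 + L * \<epsilon> \<le> expectation (Y i)"
        using cdf_bounds(1)[OF dens mi fL'] i EY Lp epos er by simp
    qed
    then show ?thesis by simp
  qed
  have muZ: "\<mu>Z \<le> real n * (1/2 - L * \<epsilon>)"
  proof -
    have "\<mu>Z \<le> (\<Sum>i\<in>{0..<n}. 1/2 - L * \<epsilon>)"
      unfolding \<mu>Z_def
    proof (rule sum_mono)
      fix i assume i: "i \<in> {0..<n}"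
      have mi: "is_median (distr M borel (X i)) m" using med i by simp
      show "expectation (Z i) \<le> 1/2 - L * \<epsilon>"
        using cdf_bounds(2)[OF dens mi fL'] i EZ Lp epos er by simp
    qed
    then show ?thesis by simp
  qed
  define B1 where "B1 = {\<omega>\<in>space M. (\<Sum>i\<in>{0..<n}. Y i \<omega>) \<le> \<mu>Y - t}"
  define B2 where "B2 = {\<omega>\<in>space M. (\<Sum>i\<in>{0..<n}. Z i \<omega>) \<ge> \<mu>Z + t}"
  have sq: "(\<Sum>i\<in>{0..<n}. ((1::real) - 0)\<^sup>2) = real n" by simp
  have PB1: "prob B1 \<le> \<alpha> / 2"
    using HY.Hoeffding_ineq_le[of t] tpos n0 expt unfolding B1_def sq by simp
  have PB2: "prob B2 \<le> \<alpha> / 2"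
    using HZ.Hoeffding_ineq_ge[of t] tpos n0 expt unfolding B2_def sq by simp
  define l where "l = n div 2"
  have l1: "1 \<le> l" "l \<le> n" unfolding l_def using n6 by auto
  have l2: "real n \<le> 2 * real l + 1"
  proof -
    have "n \<le> 2 * l + 1" unfolding l_def by presburger
    then show ?thesis by linarith
  qed
  have l3: "2 * real l \<le> real n"
  proof -
    have "2 * l \<le> n" unfolding l_def by presburger
    then show ?thesis by linarith
  qed
  have c1: "\<bar>m + \<epsilon>\<bar> < T" and c2: "\<bar>m - \<epsilon>\<bar> < T"
    using assms(10,11) epos er by auto
  define G where "G = {\<omega>\<in>space M. real l \<le> (\<Sum>i\<in>{0..<n}. Y i \<omega>) \<and> \<not> real l \<le> (\<Sum>i\<in>{0..<n}. Z i \<omega>)}"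
  have key: "\<bar>trunc_median T n (\<lambda>i. X i \<omega>) - m\<bar> \<le> \<epsilon> \<longleftrightarrow>
     real l \<le> (\<Sum>i\<in>{0..<n}. Y i \<omega>) \<and> \<not> real l \<le> (\<Sum>i\<in>{0..<n}. Z i \<omega>)" for \<omega>
  proof -
    define tm where "tm = order_stat n (\<lambda>i. clip T (X i \<omega>)) l"
    have tmd: "trunc_median T n (\<lambda>i. X i \<omega>) = tm"
      by (simp add: tm_def trunc_median_def emp_median_def l_def)
    have k1: "tm \<le> m + \<epsilon> \<longleftrightarrow> real l \<le> (\<Sum>i\<in>{0..<n}. (if clip T (X i \<omega>) \<le> m + \<epsilon> then 1 else 0 :: real))"
      unfolding tm_def by (rule order_stat_downclosed[OF l1]) auto
    have k2: "tm < m - \<epsilon> \<longleftrightarrow> real l \<le> (\<Sum>i\<in>{0..<n}. (if clip T (X i \<omega>) < m - \<epsilon> then 1 else 0 :: real))"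
      unfolding tm_def by (rule order_stat_downclosed[OF l1]) auto
    have s1: "(\<Sum>i\<in>{0..<n}. (if clip T (X i \<omega>) \<le> m + \<epsilon> then 1 else 0 :: real)) = (\<Sum>i\<in>{0..<n}. Y i \<omega>)"
      by (rule sum.cong) (auto simp: Y_def gY_def clip_le_iff[OF c1])
    have s2: "(\<Sum>i\<in>{0..<n}. (if clip T (X i \<omega>) < m - \<epsilon> then 1 else 0 :: real)) = (\<Sum>i\<in>{0..<n}. Z i \<omega>)"
      by (rule sum.cong) (auto simp: Z_def gZ_def clip_less_iff[OF c2])
    have "\<bar>tm - m\<bar> \<le> \<epsilon> \<longleftrightarrow> tm \<le> m + \<epsilon> \<and> \<not> tm < m - \<epsilon>" by auto
    then show ?thesis using k1 k2 s1 s2 tmd by simp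
  qed
  have seteq: "{\<omega> \<in> space M. \<bar>trunc_median T n (\<lambda>i. X i \<omega>) - m\<bar> \<le> sqrt (2 * ln (2 / \<alpha>3) / (real n * L^2))} = G"
    unfolding G_def using key by (simp add: \<epsilon>_def \<alpha>_def)
  have Ysm: "(\<lambda>\<omega>. \<Sum>i\<in>{0..<n}. Y i \<omega>) \<in> borel_measurable M"
    by (rule borel_measurable_sum) (use Ym in auto)
  have Zsm: "(\<lambda>\<omega>. \<Sum>i\<in>{0..<n}. Z i \<omega>) \<in> borel_measurable M"
    by (rule borel_measurable_sum) (use Zm in auto)
  have Gm: "G \<in> events" unfolding G_def using Ysm Zsm by measurable
  have B1m: "B1 \<in> events" unfolding B1_def using Ysm by measurable
  have B2m: "B2 \<in> events" unfolding B2_def using Zsm by measurable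
  have sub: "space M - (B1 \<union> B2) \<subseteq> G"
  proof
    fix \<omega> assume w: "\<omega> \<in> space M - (B1 \<union> B2)"
    then have "(\<Sum>i\<in>{0..<n}. Y i \<omega>) > \<mu>Y - t" "(\<Sum>i\<in>{0..<n}. Z i \<omega>) < \<mu>Z + t"
      unfolding B1_def B2_def by auto
    moreover have "real n * (1/2 + L * \<epsilon>) - t \<ge> real n / 2"
      unfolding t_def using n0 Lp epos by (simp add: algebra_simps)
    moreover have "real n * (1/2 - L * \<epsilon>) + t \<le> real n / 2 - t"
      unfolding t_def by (simp add: algebra_simps)
    ultimately have "real l \<le> (\<Sum>i\<in>{0..<n}. Y i \<omega>)" "\<not> real l \<le> (\<Sum>i\<in>{0..<n}. Z i \<omega>)"
      using muY muZ l2 l3 t1 by linarith+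
    then show "\<omega> \<in> G" unfolding G_def using w by simp
  qed
  have "prob G \<ge> prob (space M - (B1 \<union> B2))"
    by (rule finite_measure_mono[OF sub Gm])
  moreover have "prob (space M - (B1 \<union> B2)) = 1 - prob (B1 \<union> B2)"
    by (rule prob_compl) (use B1m B2m in auto)
  moreover have "prob (B1 \<union> B2) \<le> prob B1 + prob B2"
    by (rule measure_Un_le) (use B1m B2m in auto)
  ultimately have "prob G \<ge> 1 - \<alpha>" using PB1 PB2 by linarith
  then show ?thesis using seteq by (simp add: \<alpha>_def)
qed

end
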